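(* Let $X_1,\dots,X_n$ be independent random variables, with $X_i$ taking values in a set $\mathcal{B}_i$. For each $i$ let $\mathcal{A}_i\subseteq\mathcal{B}_i$ be measurable, and let $\mathcal{A}=\prod_{i=1}^n\mathcal{A}_i$, identified with the event $\{X_i\in\mathcal{A}_i \text{ for all } i\}$; assume $\Pr[\mathcal{A}]>0$. Let $f:\prod_{i=1}^n\mathcal{B}_i\to\mathbb{R}$ be a non-negative measurable function such that $|f(x)-f(x')|\le d_i$ whenever $x,x'\in\mathcal{A}$ differ only in the $i$-th coordinate, and let $Y=f(X_1,\dots,X_n)$ have finite expectation. Then for every $t>0$, \[ \Pr\left[Y>\frac{\mathbb{E}[Y]}{\Pr[\mathcal{A}]}+t\right]\le e^{-2t^2/\sum_{i=1}^n d_i^2}+\Pr[\bar{\mathcal{A}}], \] where $\bar{\mathcal{A}}$ is the complement of $\mathcal{A}$. *)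

theory Defs
  imports "HOL-Probability.Probability"
begin

end

theory Submission
  imports Defs
begin


lemma pint_bounds:
  fixes f :: "'a \<Rightarrow> real"
  assumes "prob_space M" "f \<in> borel_measurable M"
    and "\<And>x. x \<in> space M \<Longrightarrow> a \<le> f x \<and> f x \<le> b"
  shows "integrable M f" "a \<le> integral\<^sup>L M f" "integral\<^sup>L M f \<le> b"
proof -
  interpret prob_space M by fact
  show int: "integrable M f"
  proof (rule integrable_const_bound[where B="max \<bar>a\<bar> \<bar>b\<bar>"])
    show "AE x in M. norm (f x) \<le> max \<bar>a\<bar> \<bar>b\<bar>"
    proof (rule AE_I2)
      fix x assume "x \<in> space M"
      from assms(3)[OF this] show "norm (f x) \<le> max \<bar>a\<bar> \<bar>b\<bar>" by auto
    qed
  qed (use assms in auto)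
  have "integral\<^sup>L M (\<lambda>_. a) \<le> integral\<^sup>L M f"
    by (intro integral_mono int) (use assms in auto)
  then show "a \<le> integral\<^sup>L M f" by (simp add: prob_space)
  have "integral\<^sup>L M f \<le> integral\<^sup>L M (\<lambda>_. b)"
    by (intro integral_mono int) (use assms in auto)
  then show "integral\<^sup>L M f \<le> b" by (simp add: prob_space)
qed

lemma mcd_mgf:
  fixes M :: "'i \<Rightarrow> 'b measure" and g :: "('i \<Rightarrow> 'b) \<Rightarrow> real" and d :: "'i \<Rightarrow> real"
  assumes PS: "\<And>i. prob_space (M i)" and s: "s > 0"
  shows "finite J \<Longrightarrow> g \<in> borel_measurable (PiM J M) \<Longrightarrow>
    (\<And>x. x \<in> space (PiM J M) \<Longrightarrow> \<bar>g x\<bar> \<le> K) \<Longrightarrow>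
    (\<And>j x x'. j \<in> J \<Longrightarrow> x \<in> space (PiM J M) \<Longrightarrow> x' \<in> space (PiM J M) \<Longrightarrow>
        (\<forall>k\<in>J. k \<noteq> j \<longrightarrow> x k = x' k) \<Longrightarrow> \<bar>g x - g x'\<bar> \<le> d j) \<Longrightarrow>
    (\<integral>\<^sup>+x. ennreal (exp (s * (g x - (\<integral>z. g z \<partial>PiM J M)))) \<partial>PiM J M)
      \<le> ennreal (exp (s\<^sup>2 * (\<Sum>j\<in>J. (d j)\<^sup>2) / 8))"
proof (induction J arbitrary: g K rule: finite_induct)
  case empty
  have sp: "space (PiM {} M) = {\<lambda>_. undefined}" by (simp add: space_PiM)
  interpret P: prob_space "PiM {} M" by (rule prob_space_PiM) (use PS in auto)
  have "(\<integral>z. g z \<partial>PiM {} M) = (\<integral>z. g (\<lambda>_. undefined) \<partial>PiM {} M)"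
    by (rule Bochner_Integration.integral_cong[OF refl]) (auto simp: sp)
  also have "\<dots> = g (\<lambda>_. undefined)" by (simp add: P.prob_space)
  finally have c: "(\<integral>z. g z \<partial>PiM {} M) = g (\<lambda>_. undefined)" .
  have "(\<integral>\<^sup>+x. ennreal (exp (s * (g x - (\<integral>z. g z \<partial>PiM {} M)))) \<partial>PiM {} M) = (\<integral>\<^sup>+x. 1 \<partial>PiM {} M)"
    by (rule nn_integral_cong) (auto simp: sp c)
  also have "\<dots> = 1" by (simp add: P.emeasure_space_1)
  finally show ?case by simp
next
  case (insert i I g K)
  interpret product_sigma_finite M
    by (simp add: product_sigma_finite_def PS prob_space_imp_sigma_finite)
  interpret Mi: prob_space "M i" by (rule PS)
  interpret PI: prob_space "PiM I M" by (rule prob_space_PiM) (use PS in auto)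
  interpret PJ: prob_space "PiM (insert i I) M" by (rule prob_space_PiM) (use PS in auto)
  note gm[measurable] = insert.prems(1)
  define c where "c = (\<integral>z. g z \<partial>PiM (insert i I) M)"
  define h where "h x = (\<integral>y. g (x(i:=y)) \<partial>M i)" for x
  have upd: "x(i:=y) \<in> space (PiM (insert i I) M)" if "x \<in> space (PiM I M)" "y \<in> space (M i)" for x y
    using that by (auto simp: space_PiM PiE_def extensional_def)
  have gym: "(\<lambda>y. g (x(i:=y))) \<in> borel_measurable (M i)" if "x \<in> space (PiM I M)" for x
    by (rule measurable_compose[OF measurable_component_update[OF that insert.hyps(2)] gm])
  have gbd: "-K \<le> g z \<and> g z \<le> K" if "z \<in> space (PiM (insert i I) M)" for z
    using insert.prems(2)[OF that] by (auto simp: abs_le_iff)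
  have hb: "-K \<le> h x \<and> h x \<le> K" if "x \<in> space (PiM I M)" for x
    using pint_bounds(2,3)[OF PS gym[OF that], of "-K" K] gbd[OF upd[OF that]] unfolding h_def
    by auto
  have hm: "h \<in> borel_measurable (PiM I M)"
  proof -
    have "(\<lambda>(x,y). g (x(i:=y))) \<in> borel_measurable (PiM I M \<Otimes>\<^sub>M M i)"
      using measurable_compose[OF measurable_add_dim gm] by (simp add: case_prod_beta')
    then have "case_prod (\<lambda>x y. g (x(i:=y))) \<in> borel_measurable (PiM I M \<Otimes>\<^sub>M M i)" by simp
    then show ?thesis unfolding h_def by (rule sigma_finite_measure.borel_measurable_lebesgue_integral[OF prob_space_imp_sigma_finite[OF PS]])
  qed
  have hd: "\<bar>h x - h x'\<bar> \<le> d j" if j: "j \<in> I" and x: "x \<in> space (PiM I M)"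
    and x': "x' \<in> space (PiM I M)" and ag: "\<forall>k\<in>I. k \<noteq> j \<longrightarrow> x k = x' k" for j x x'
  proof -
    have dd: "\<bar>g (x(i:=y)) - g (x'(i:=y))\<bar> \<le> d j" if y: "y \<in> space (M i)" for y
      by (rule insert.prems(3)[OF _ upd[OF x y] upd[OF x' y]]) (use j ag in auto)
    have eq: "h x - h x' = (\<integral>y. g (x(i:=y)) - g (x'(i:=y)) \<partial>M i)"
      unfolding h_def
      by (rule Bochner_Integration.integral_diff[symmetric])
         (use pint_bounds(1)[OF PS gym[OF x], of "-K" K] pint_bounds(1)[OF PS gym[OF x'], of "-K" K]
              gbd[OF upd[OF x]] gbd[OF upd[OF x']] in auto)
    have db: "- d j \<le> g (x(i:=y)) - g (x'(i:=y)) \<and> g (x(i:=y)) - g (x'(i:=y)) \<le> d j"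
      if "y \<in> space (M i)" for y using dd[OF that] by (auto simp: abs_le_iff)
    have mdf: "(\<lambda>y. g (x(i:=y)) - g (x'(i:=y))) \<in> borel_measurable (M i)"
      using gym[OF x] gym[OF x'] by measurable
    have "- d j \<le> (\<integral>y. g (x(i:=y)) - g (x'(i:=y)) \<partial>M i)"
      "(\<integral>y. g (x(i:=y)) - g (x'(i:=y)) \<partial>M i) \<le> d j"
      using pint_bounds(2,3)[OF PS mdf db] by auto
    with eq show ?thesis by (auto simp: abs_le_iff)
  qed
  have IH: "(\<integral>\<^sup>+x. ennreal (exp (s * (h x - (\<integral>z. h z \<partial>PiM I M)))) \<partial>PiM I M)
      \<le> ennreal (exp (s\<^sup>2 * (\<Sum>j\<in>I. (d j)\<^sup>2) / 8))"
    by (rule insert.IH[OF hm, of K]) (use hb hd in \<open>force simp: abs_le_iff\<close>)+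
  have intg: "integrable (PiM (insert i I) M) g"
    using pint_bounds(1)[OF PJ.prob_space_axioms gm, of "-K" K] gbd by auto
  have ceq: "c = (\<integral>z. h z \<partial>PiM I M)"
    unfolding c_def h_def by (rule product_integral_insert) (use insert.hyps intg in auto)
  have inner: "(\<integral>\<^sup>+y. ennreal (exp (s * (g (x(i:=y)) - c))) \<partial>M i)
      \<le> ennreal (exp (s * (h x - c))) * ennreal (exp (s\<^sup>2 * (d i)\<^sup>2 / 8))"
    if x: "x \<in> space (PiM I M)" for x
  proof -
    define V where "V = (\<lambda>y. g (x(i:=y))) ` space (M i)"
    define lo where "lo = Inf V"
    have Vne: "V \<noteq> {}" using Mi.not_empty unfolding V_def by auto
    have Vbdd: "bdd_below V" unfolding V_def bdd_below_def
      using gbd[OF upd[OF x]] by (intro exI[of _ "-K"]) auto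
    have vb: "lo \<le> g (x(i:=y)) \<and> g (x(i:=y)) \<le> lo + d i" if y: "y \<in> space (M i)" for y
    proof
      show "lo \<le> g (x(i:=y))" unfolding lo_def by (rule cInf_lower) (use y Vbdd V_def in auto)
      have "g (x(i:=y)) - d i \<le> lo" unfolding lo_def
      proof (rule cInf_greatest[OF Vne])
        fix v assume "v \<in> V"
        then obtain y' where y': "y' \<in> space (M i)" "v = g (x(i:=y'))" unfolding V_def by auto
        have "\<bar>g (x(i:=y)) - g (x(i:=y'))\<bar> \<le> d i"
          by (rule insert.prems(3)[OF _ upd[OF x y] upd[OF x y'(1)]]) auto
        then show "g (x(i:=y)) - d i \<le> v" using y' by auto
      qed
      then show "g (x(i:=y)) \<le> lo + d i" by simp
    qed
    interpret IB: interval_bounded_random_variable "M i" "\<lambda>y. g (x(i:=y))" lo "lo + d i"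
      by unfold_locales (use gym[OF x] vb in \<open>auto intro!: AE_I2\<close>)
    have hoef: "(\<integral>\<^sup>+y. ennreal (exp (s * (g (x(i:=y)) - h x))) \<partial>M i) \<le> ennreal (exp (s\<^sup>2 * (d i)\<^sup>2 / 8))"
      using IB.Hoeffdings_lemma_nn_integral[OF s] unfolding h_def by simp
    note [measurable] = gym[OF x]
    have "(\<integral>\<^sup>+y. ennreal (exp (s * (g (x(i:=y)) - c))) \<partial>M i)
        = (\<integral>\<^sup>+y. ennreal (exp (s * (h x - c))) * ennreal (exp (s * (g (x(i:=y)) - h x))) \<partial>M i)"
      by (rule nn_integral_cong) (simp add: ennreal_mult'[symmetric] exp_add[symmetric] algebra_simps)
    also have "\<dots> = ennreal (exp (s * (h x - c))) * (\<integral>\<^sup>+y. ennreal (exp (s * (g (x(i:=y)) - h x))) \<partial>M i)"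
      by (rule nn_integral_cmult) measurable
    also have "\<dots> \<le> ennreal (exp (s * (h x - c))) * ennreal (exp (s\<^sup>2 * (d i)\<^sup>2 / 8))"
      by (rule mult_left_mono[OF hoef]) simp
    finally show ?thesis .
  qed
  have "(\<integral>\<^sup>+z. ennreal (exp (s * (g z - c))) \<partial>PiM (insert i I) M)
      = (\<integral>\<^sup>+x. (\<integral>\<^sup>+y. ennreal (exp (s * (g (x(i:=y)) - c))) \<partial>M i) \<partial>PiM I M)"
    by (rule product_nn_integral_insert) (use insert.hyps in auto)
  also have "\<dots> \<le> (\<integral>\<^sup>+x. ennreal (exp (s * (h x - c))) * ennreal (exp (s\<^sup>2 * (d i)\<^sup>2 / 8)) \<partial>PiM I M)"
    by (rule nn_integral_mono) (rule inner)
  also have "\<dots> = (\<integral>\<^sup>+x. ennreal (exp (s * (h x - c))) \<partial>PiM I M) * ennreal (exp (s\<^sup>2 * (d i)\<^sup>2 / 8))"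
    using hm by (intro nn_integral_multc) (auto intro!: measurable_compose[OF _ measurable_ennreal] borel_measurable_exp borel_measurable_times borel_measurable_diff)
  also have "\<dots> \<le> ennreal (exp (s\<^sup>2 * (\<Sum>j\<in>I. (d j)\<^sup>2) / 8)) * ennreal (exp (s\<^sup>2 * (d i)\<^sup>2 / 8))"
    by (rule mult_right_mono) (use IH ceq in simp_all)
  also have "\<dots> = ennreal (exp (s\<^sup>2 * (\<Sum>j\<in>insert i I. (d j)\<^sup>2) / 8))"
    using insert.hyps by (simp add: ennreal_mult'[symmetric] exp_add[symmetric] add_divide_distrib distrib_left)
  finally show ?case unfolding c_def .
qed

lemma mcd_tail:
  fixes M :: "'i \<Rightarrow> 'b measure" and g :: "('i \<Rightarrow> 'b) \<Rightarrow> real" and d :: "'i \<Rightarrow> real"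
  assumes PS: "\<And>i. prob_space (M i)" and fin: "finite J"
    and gm: "g \<in> borel_measurable (PiM J M)"
    and gb: "\<And>x. x \<in> space (PiM J M) \<Longrightarrow> \<bar>g x\<bar> \<le> K"
    and gd: "\<And>j x x'. j \<in> J \<Longrightarrow> x \<in> space (PiM J M) \<Longrightarrow> x' \<in> space (PiM J M) \<Longrightarrow>
        (\<forall>k\<in>J. k \<noteq> j \<longrightarrow> x k = x' k) \<Longrightarrow> \<bar>g x - g x'\<bar> \<le> d j"
    and t: "t > 0"
  shows "measure (PiM J M) {x\<in>space (PiM J M). g x > (\<integral>z. g z \<partial>PiM J M) + t}
      \<le> exp (-2*t\<^sup>2/(\<Sum>j\<in>J. (d j)\<^sup>2))"
proof -
  interpret P: prob_space "PiM J M" by (rule prob_space_PiM) (use PS in auto)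
  define D where "D = (\<Sum>j\<in>J. (d j)\<^sup>2)"
  define c where "c = (\<integral>z. g z \<partial>PiM J M)"
  note [measurable] = gm
  have "D \<ge> 0" unfolding D_def by (intro sum_nonneg) auto
  show ?thesis
  proof (cases "D = 0")
    case True
    then show ?thesis using P.prob_le_1 by (simp add: D_def[symmetric])
  next
    case False
    with \<open>D \<ge> 0\<close> have Dp: "D > 0" by simp
    define s where "s = 4 * t / D"
    have s: "s > 0" unfolding s_def using Dp t by simp
    have mgf: "(\<integral>\<^sup>+x. ennreal (exp (s * (g x - c))) \<partial>PiM J M) \<le> ennreal (exp (s\<^sup>2 * D / 8))"
      unfolding c_def D_def by (rule mcd_mgf[OF PS s fin gm gb gd]) auto
    have "emeasure (PiM J M) {x\<in>space (PiM J M). (g x - c) \<ge> t}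
        \<le> ennreal (exp (-s * t)) * (\<integral>\<^sup>+x. ennreal (exp (s * (g x - c))) * indicator (space (PiM J M)) x \<partial>PiM J M)"
      by (rule Chernoff_ineq_nn_integral_ge[OF s]) auto
    also have "(\<integral>\<^sup>+x. ennreal (exp (s * (g x - c))) * indicator (space (PiM J M)) x \<partial>PiM J M)
        = (\<integral>\<^sup>+x. ennreal (exp (s * (g x - c))) \<partial>PiM J M)"
      by (rule nn_integral_cong) auto
    also have "ennreal (exp (-s * t)) * \<dots> \<le> ennreal (exp (-s * t)) * ennreal (exp (s\<^sup>2 * D / 8))"
      by (rule mult_left_mono[OF mgf]) simp
    also have "\<dots> = ennreal (exp (-2*t\<^sup>2/D))"
    proof -
      have "-s * t + s\<^sup>2 * D / 8 = -2*t\<^sup>2/D"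
        unfolding s_def using Dp by (simp add: field_simps power2_eq_square)
      then show ?thesis by (simp add: ennreal_mult'[symmetric] exp_add[symmetric])
    qed
    finally have em: "emeasure (PiM J M) {x\<in>space (PiM J M). (g x - c) \<ge> t} \<le> ennreal (exp (-2*t\<^sup>2/D))" .
    have "measure (PiM J M) {x\<in>space (PiM J M). g x > c + t}
        \<le> measure (PiM J M) {x\<in>space (PiM J M). (g x - c) \<ge> t}"
      by (rule P.finite_measure_mono) auto
    also have "\<dots> \<le> exp (-2*t\<^sup>2/D)"
      using em by (simp add: P.emeasure_eq_measure)
    finally show ?thesis unfolding c_def D_def .
  qed
qed

lemma bd_chain:
  fixes f :: "('i \<Rightarrow> 'b) \<Rightarrow> real"
  assumes hd: "\<And>i x x'. i \<in> I \<Longrightarrow> x \<in> PiE I A \<Longrightarrow> x' \<in> PiE I A \<Longrightarrow>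
           (\<forall>j\<in>I. j \<noteq> i \<longrightarrow> x j = x' j) \<Longrightarrow> \<bar>f x - f x'\<bar> \<le> d i"
  shows "finite J \<Longrightarrow> J \<subseteq> I \<Longrightarrow> y \<in> PiE I A \<Longrightarrow> z \<in> PiE I A \<Longrightarrow> (\<forall>j\<in>I-J. y j = z j)
    \<Longrightarrow> \<bar>f y - f z\<bar> \<le> (\<Sum>j\<in>J. d j)"
proof (induction J arbitrary: z rule: finite_induct)
  case empty
  then have "y = z" by (intro PiE_ext[of y I A z]) auto
  then show ?case by simp
next
  case (insert j J z)
  define w where "w = z(j := y j)"
  have jI: "j \<in> I" using insert.prems by auto
  have w: "w \<in> PiE I A" using insert.prems jI unfolding w_def
    by (auto simp: PiE_iff extensional_def)
  have "\<bar>f y - f w\<bar> \<le> (\<Sum>j\<in>J. d j)"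
    by (rule insert.IH) (use insert.prems w in \<open>auto simp: w_def\<close>)
  moreover have "\<bar>f w - f z\<bar> \<le> d j"
    by (rule hd[OF jI w insert.prems(3)]) (auto simp: w_def)
  ultimately show ?case using insert.hyps by simp
qed

lemma ennreal_prod_lt_top:
  fixes b :: "'i \<Rightarrow> ennreal"
  shows "finite I \<Longrightarrow> (\<And>i. i \<in> I \<Longrightarrow> b i < top) \<Longrightarrow> (\<Prod>i\<in>I. b i) < top"
  by (induction I rule: finite_induct) (auto simp: ennreal_mult_less_top)

lemma ennreal_prod_inverse:
  fixes b :: "'i \<Rightarrow> ennreal"
  shows "finite I \<Longrightarrow> (\<And>i. i \<in> I \<Longrightarrow> b i < top) \<Longrightarrow> inverse (\<Prod>i\<in>I. b i) = (\<Prod>i\<in>I. inverse (b i))"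
proof (induction I rule: finite_induct)
  case (insert j J)
  have "(\<Prod>i\<in>J. b i) < top" using insert by (intro ennreal_prod_lt_top) auto
  then show ?case using insert by (simp add: ennreal_inverse_mult)
qed simp

lemma ennreal_prod_divide:
  fixes a b :: "'i \<Rightarrow> ennreal"
  assumes "finite I" "\<And>i. i \<in> I \<Longrightarrow> b i < top"
  shows "(\<Prod>i\<in>I. a i) / (\<Prod>i\<in>I. b i) = (\<Prod>i\<in>I. a i / b i)"
  using ennreal_prod_inverse[OF assms]
  by (simp add: divide_ennreal_def prod.distrib)



theorem mainTheorem4:
  fixes M :: "'a measure" and N :: "nat \<Rightarrow> 'b measure" and X :: "nat \<Rightarrow> 'a \<Rightarrow> 'b"
    and n :: nat and A :: "nat \<Rightarrow> 'b set" and f :: "(nat \<Rightarrow> 'b) \<Rightarrow> real"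
    and d :: "nat \<Rightarrow> real" and t :: real
  assumes "prob_space M"
    and "prob_space.indep_vars M N X {1..n}"
    and "\<And>i. i \<in> {1..n} \<Longrightarrow> A i \<in> sets (N i)"
    and "measure M {\<omega> \<in> space M. \<forall>i\<in>{1..n}. X i \<omega> \<in> A i} > 0"
    and "f \<in> borel_measurable (PiM {1..n} N)"
    and "\<And>x. x \<in> space (PiM {1..n} N) \<Longrightarrow> f x \<ge> 0"
    and "\<And>i x x'. i \<in> {1..n} \<Longrightarrow> x \<in> PiE {1..n} A \<Longrightarrow> x' \<in> PiE {1..n} A \<Longrightarrow>
           (\<forall>j\<in>{1..n}. j \<noteq> i \<longrightarrow> x j = x' j) \<Longrightarrow> \<bar>f x - f x'\<bar> \<le> d i"
    and "integrable M (\<lambda>\<omega>. f (\<lambda>i\<in>{1..n}. X i \<omega>))"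
    and "t > 0"
  shows "measure M {\<omega> \<in> space M. f (\<lambda>i\<in>{1..n}. X i \<omega>) >
            (\<integral>\<omega>. f (\<lambda>i\<in>{1..n}. X i \<omega>) \<partial>M)
              / measure M {\<omega> \<in> space M. \<forall>i\<in>{1..n}. X i \<omega> \<in> A i} + t}
         \<le> exp (- 2 * t\<^sup>2 / (\<Sum>i\<in>{1..n}. (d i)\<^sup>2))
            + measure M (space M - {\<omega> \<in> space M. \<forall>i\<in>{1..n}. X i \<omega> \<in> A i})"
proof -
  interpret prob_space M by fact
  define I where "I = {1..n}"
  define B where "B = {\<omega> \<in> space M. \<forall>i\<in>I. X i \<omega> \<in> A i}"
  define p where "p = measure M B"
  define D where "D = (\<Sum>i\<in>I. (d i)\<^sup>2)"
  define c where "c = (\<integral>\<omega>. f (\<lambda>i\<in>I. X i \<omega>) \<partial>M)"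
  define E where "E = {\<omega> \<in> space M. f (\<lambda>i\<in>I. X i \<omega>) > c / p + t}"
  have finI: "finite I" unfolding I_def by simp
  have p: "p > 0" using assms(4) unfolding p_def B_def I_def .
  have Asets: "\<And>i. i \<in> I \<Longrightarrow> A i \<in> sets (N i)" using assms(3) unfolding I_def .
  have indep: "indep_vars N X I" using assms(2) unfolding I_def .
  have rv: "\<And>i. i \<in> I \<Longrightarrow> X i \<in> measurable M (N i)"
    using indep unfolding indep_vars_def by auto
  have Xm: "(\<lambda>\<omega>. \<lambda>i\<in>I. X i \<omega>) \<in> measurable M (PiM I N)"
    by (rule measurable_restrict) (rule rv)
  have fm[measurable]: "f \<in> borel_measurable (PiM I N)" using assms(5) unfolding I_def .
  have Bsets: "B \<in> events" unfolding B_def using rv Asets by measurable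
  have Esets: "E \<in> events" unfolding E_def using Xm by measurable
  have goal_eq: "?thesis \<longleftrightarrow> measure M E \<le> exp (- 2 * t\<^sup>2 / D) + measure M (space M - B)"
    unfolding E_def c_def p_def B_def D_def I_def ..
  have main: "measure M E \<le> exp (- 2 * t\<^sup>2 / D) + measure M (space M - B)"
  proof (cases "D = 0")
    case True
    then have e1: "exp (- 2 * t\<^sup>2 / D) = 1" by simp
    have "prob E \<le> 1" "0 \<le> prob (space M - B)" by auto
    then show ?thesis unfolding e1 by linarith
  next
    case False
    then have Ine: "I \<noteq> {}" unfolding D_def by auto
    define \<mu> where "\<mu> i = (if i \<in> I then distr M (N i) (X i) else return (count_space UNIV) undefined)" for i
    define \<nu> where "\<nu> i = (if i \<in> I then uniform_measure (\<mu> i) (A i) else return (count_space UNIV) undefined)" for i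
    define Xv where "Xv = (\<lambda>\<omega>. \<lambda>i\<in>I. X i \<omega>)"
    define P where "P = distr M (PiM I N) Xv"
    define S where "S = PiE I A"
    have Xvm[measurable]: "Xv \<in> measurable M (PiM I N)" unfolding Xv_def by (rule Xm)
    have muPS: "prob_space (\<mu> i)" for i
      unfolding \<mu>_def using rv by (auto intro!: prob_space_distr prob_space_return)
    have sets_mu: "sets (\<mu> i) = sets (N i)" if "i \<in> I" for i using that unfolding \<mu>_def by simp
    have Amu: "A i \<in> sets (\<mu> i)" if "i \<in> I" for i using Asets[OF that] sets_mu[OF that] by simp
    have Peq: "P = PiM I \<mu>"
    proof -
      have "distr M (PiM I N) Xv = PiM I (\<lambda>i. distr M (N i) (X i))"
        using indep_vars_iff_distr_eq_PiM'[where I=I and M'=N and X=X, OF Ine rv] indep unfolding Xv_def by blast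
      also have "\<dots> = PiM I \<mu>" by (rule PiM_cong) (auto simp: \<mu>_def)
      finally show ?thesis unfolding P_def .
    qed
    interpret P: prob_space P unfolding P_def by (rule prob_space_distr[OF Xvm])
    have sets_P: "sets P = sets (PiM I N)" unfolding P_def by simp
    have space_P: "space P = space (PiM I N)" unfolding P_def by simp
    have Ssets: "S \<in> sets (PiM I N)" unfolding S_def by (rule sets_PiM_I_finite[OF finI Asets])
    have BS: "B = Xv -` S \<inter> space M" unfolding B_def S_def Xv_def by (auto simp: PiE_iff)
    have PS_eq: "emeasure P S = emeasure M B" unfolding P_def BS by (rule emeasure_distr[OF Xvm Ssets])
    have pS: "measure P S = p" unfolding P_def p_def BS by (rule measure_distr[OF Xvm Ssets])
    have Bpos: "emeasure M B > 0" using p unfolding p_def emeasure_eq_measure by simp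
    have muA: "emeasure M B \<le> emeasure (\<mu> i) (A i)" if i: "i \<in> I" for i
    proof -
      have "emeasure (\<mu> i) (A i) = emeasure M (X i -` A i \<inter> space M)"
        using i by (simp add: \<mu>_def emeasure_distr rv Asets)
      moreover have "B \<subseteq> X i -` A i \<inter> space M" using i unfolding B_def by auto
      moreover have "X i -` A i \<inter> space M \<in> events" using measurable_sets[OF rv[OF i] Asets[OF i]] .
      ultimately show ?thesis by (simp add: emeasure_mono)
    qed
    have muA0: "emeasure (\<mu> i) (A i) \<noteq> 0" if "i \<in> I" for i using muA[OF that] Bpos by auto
    have muAfin: "emeasure (\<mu> i) (A i) < \<infinity>" for i
      using prob_space.emeasure_le_1[OF muPS, of i "A i"] by (simp add: order_le_less_trans)
    have nuPS: "prob_space (\<nu> i)" for i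
      unfolding \<nu>_def using muA0 muAfin
      by (auto intro!: prob_space_uniform_measure prob_space_return) (metis less_irrefl)
    have sets_nu: "sets (\<nu> i) = sets (N i)" if "i \<in> I" for i using that sets_mu unfolding \<nu>_def by simp
    have sets_PiM_nu: "sets (PiM I \<nu>) = sets (PiM I N)" by (rule sets_PiM_cong) (auto simp: sets_nu)
    have space_PiM_nu: "space (PiM I \<nu>) = space (PiM I N)" by (rule sets_eq_imp_space_eq[OF sets_PiM_nu])
    have PS0: "emeasure P S \<noteq> 0" using PS_eq Bpos by simp
    have PSfin: "emeasure P S \<noteq> \<infinity>" by (simp add: P.emeasure_eq_measure)
    have Qeq: "PiM I \<nu> = uniform_measure P S"
    proof -
      interpret product_sigma_finite \<nu>
        by (simp add: product_sigma_finite_def nuPS prob_space_imp_sigma_finite)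
      interpret pmu: product_sigma_finite \<mu>
        by (simp add: product_sigma_finite_def muPS prob_space_imp_sigma_finite)
      show ?thesis
      proof (rule PiM_eqI[symmetric, OF finI])
        show "sets (uniform_measure P S) = sets (PiM I \<nu>)" using sets_P sets_PiM_nu by simp
      next
        fix C assume C: "\<And>i. i \<in> I \<Longrightarrow> C i \<in> sets (\<nu> i)"
        have Csets: "C i \<in> sets (\<mu> i)" if "i \<in> I" for i
          using C[OF that] sets_mu[OF that] sets_nu[OF that] by simp
        have CP: "PiE I C \<in> sets P"
          using sets_PiM_I_finite[where I=I and E=C and M=\<nu>, OF finI C] sets_PiM_nu sets_P by simp
        have "emeasure (uniform_measure P S) (PiE I C) = emeasure P (S \<inter> PiE I C) / emeasure P S"
          by (rule emeasure_uniform_measure) (use Ssets sets_P CP in auto)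
        also have "S \<inter> PiE I C = PiE I (\<lambda>i. A i \<inter> C i)" unfolding S_def by (rule PiE_Int)
        also have "emeasure P (PiE I (\<lambda>i. A i \<inter> C i)) = (\<Prod>i\<in>I. emeasure (\<mu> i) (A i \<inter> C i))"
          unfolding Peq by (rule pmu.emeasure_PiM[OF finI]) (use Csets Amu in auto)
        also have "emeasure P S = (\<Prod>i\<in>I. emeasure (\<mu> i) (A i))"
          unfolding Peq S_def by (rule pmu.emeasure_PiM[OF finI]) (use Amu in auto)
        also have "(\<Prod>i\<in>I. emeasure (\<mu> i) (A i \<inter> C i)) / (\<Prod>i\<in>I. emeasure (\<mu> i) (A i))
            = (\<Prod>i\<in>I. emeasure (\<mu> i) (A i \<inter> C i) / emeasure (\<mu> i) (A i))"
          by (rule ennreal_prod_divide[OF finI muAfin[simplified]])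
        also have "\<dots> = (\<Prod>i\<in>I. emeasure (\<nu> i) (C i))"
          by (rule prod.cong) (auto simp: \<nu>_def Amu Csets)
        finally show "emeasure (uniform_measure P S) (PiE I C) = (\<Prod>i\<in>I. emeasure (\<nu> i) (C i))" .
      qed
    qed
    have hd: "\<And>i x x'. i \<in> I \<Longrightarrow> x \<in> PiE I A \<Longrightarrow> x' \<in> PiE I A \<Longrightarrow>
           (\<forall>j\<in>I. j \<noteq> i \<longrightarrow> x j = x' j) \<Longrightarrow> \<bar>f x - f x'\<bar> \<le> d i"
      using assms(7) unfolding I_def by blast
    have fnn: "f x \<ge> 0" if "x \<in> space (PiM I N)" for x using assms(6) that unfolding I_def by blast
    obtain z0 where z0: "z0 \<in> S" using PS0 by (metis emeasure_empty ex_in_conv)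
    have Ssp: "S \<subseteq> space (PiM I N)" using sets.sets_into_space[OF Ssets] .
    define proj where "proj x = (\<lambda>i\<in>I. if x i \<in> A i then x i else z0 i)" for x :: "nat \<Rightarrow> 'b"
    define g where "g x = f (proj x)" for x
    have projS: "proj x \<in> S" for x using z0 unfolding proj_def S_def by (auto simp: PiE_iff)
    have projid: "proj x = x" if "x \<in> S" for x
      using that unfolding proj_def S_def by (auto simp: PiE_iff extensional_def fun_eq_iff)
    have projm: "proj \<in> measurable (PiM I N) (PiM I N)"
      unfolding proj_def
    proof (rule measurable_restrict)
      fix i assume i: "i \<in> I"
      have z0i: "z0 i \<in> space (N i)"
        using z0 i sets.sets_into_space[OF Asets[OF i]] unfolding S_def by (auto simp: PiE_iff)
      note [measurable] = Asets[OF i]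
      show "(\<lambda>x. if x i \<in> A i then x i else z0 i) \<in> measurable (PiM I N) (N i)"
        using i z0i by measurable
    qed
    have gm: "g \<in> borel_measurable (PiM I N)" unfolding g_def by (rule measurable_compose[OF projm fm])
    have gnn: "g x \<ge> 0" for x unfolding g_def using fnn projS Ssp by auto
    define K where "K = f z0 + (\<Sum>i\<in>I. d i)"
    have gb: "\<bar>g x\<bar> \<le> K" for x
    proof -
      have "\<bar>f (proj x) - f z0\<bar> \<le> (\<Sum>i\<in>I. d i)"
        by (rule bd_chain[OF hd finI subset_refl]) (use projS z0 in \<open>auto simp: S_def\<close>)
      moreover have "f (proj x) \<ge> 0" "f z0 \<ge> 0" using fnn projS Ssp z0 by auto
      ultimately show ?thesis unfolding g_def K_def by auto
    qed
    have gd: "\<bar>g x - g x'\<bar> \<le> d j" if "j \<in> I" "\<forall>k\<in>I. k \<noteq> j \<longrightarrow> x k = x' k" for j x x'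
      unfolding g_def by (rule hd) (use that projS in \<open>auto simp: S_def proj_def\<close>)
    interpret Q: prob_space "PiM I \<nu>" by (rule prob_space_PiM) (use nuPS in auto)
    have gmQ: "g \<in> borel_measurable (PiM I \<nu>)"
      by (subst measurable_cong_sets[OF sets_PiM_nu refl]) (rule gm)
    have gmP: "g \<in> borel_measurable P"
      by (subst measurable_cong_sets[OF sets_P refl]) (rule gm)
    have tail: "measure (PiM I \<nu>) {x\<in>space (PiM I \<nu>). g x > (\<integral>z. g z \<partial>PiM I \<nu>) + t} \<le> exp (-2*t\<^sup>2/D)"
      unfolding D_def by (rule mcd_tail[OF nuPS finI gmQ gb gd assms(9)]) auto
    have fP_int: "integrable P f"
      unfolding P_def using integrable_distr_eq[OF Xvm fm] assms(8) unfolding Xv_def I_def by simp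
    have cP: "(\<integral>x. f x \<partial>P) = c"
      unfolding P_def c_def Xv_def by (rule integral_distr[OF Xvm[unfolded Xv_def] fm])
    have c0: "c \<ge> 0" unfolding cP[symmetric]
      by (rule integral_nonneg_AE) (auto simp: space_P fnn intro!: AE_I2)
    have gQ: "(\<integral>x. g x \<partial>PiM I \<nu>) \<le> c / p"
    proof -
      have le1: "(\<integral>\<^sup>+x. ennreal (g x) * indicator S x \<partial>P) \<le> (\<integral>\<^sup>+x. ennreal (f x) \<partial>P)"
        by (rule nn_integral_mono) (auto simp: indicator_def g_def projid)
      have eq2: "(\<integral>\<^sup>+x. ennreal (f x) \<partial>P) = ennreal c"
      proof -
        have "AE x in P. 0 \<le> f x" by (rule AE_I2) (simp add: space_P fnn)
        then show ?thesis using nn_integral_eq_integral[OF fP_int] cP by simp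
      qed
      have eq3: "emeasure P S = ennreal p" using pS P.emeasure_eq_measure by simp
      have "(\<integral>\<^sup>+x. ennreal (g x) \<partial>PiM I \<nu>) = (\<integral>\<^sup>+x. ennreal (g x) * indicator S x \<partial>P) / emeasure P S"
        unfolding Qeq by (rule nn_integral_uniform_measure) (use gmP Ssets sets_P in auto)
      also have "\<dots> \<le> ennreal c / ennreal p"
        unfolding eq3 using le1 eq2 by (auto intro: divide_right_mono_ennreal)
      also have "ennreal c / ennreal p = ennreal (c / p)" using c0 p by (simp add: divide_ennreal)
      finally have le: "(\<integral>\<^sup>+x. ennreal (g x) \<partial>PiM I \<nu>) \<le> ennreal (c / p)" .
      have "(\<integral>x. g x \<partial>PiM I \<nu>) = enn2real (\<integral>\<^sup>+x. ennreal (g x) \<partial>PiM I \<nu>)"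
        by (rule integral_eq_nn_integral) (use gmQ gnn in auto)
      also have "\<dots> \<le> c / p" by (rule enn2real_leI) (use le c0 p in auto)
      finally show ?thesis .
    qed
    define F where "F = {x \<in> space (PiM I N). f x > c / p + t}"
    have Fsets: "F \<in> sets (PiM I N)" unfolding F_def by measurable
    have EF: "E = Xv -` F \<inter> space M"
      unfolding E_def F_def Xv_def using measurable_space[OF Xm] by auto
    have mE: "measure M E = measure P F" unfolding P_def EF by (rule measure_distr[OF Xvm Fsets, symmetric])
    have mB: "measure M (space M - B) = 1 - p" unfolding p_def by (rule prob_compl[OF Bsets])
    have FP: "F \<in> sets P" "S \<in> sets P" using Fsets Ssets sets_P by auto
    have "measure P F \<le> measure P ((F \<inter> S) \<union> (space P - S))"
      by (rule P.finite_measure_mono) (use FP sets.sets_into_space[OF FP(1)] in auto)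
    also have "\<dots> \<le> measure P (F \<inter> S) + measure P (space P - S)"
      by (rule measure_Un_le) (use FP in auto)
    also have "measure P (space P - S) = 1 - p" using P.prob_compl[OF FP(2)] pS by simp
    also have "measure P (F \<inter> S) = p * measure (PiM I \<nu>) (F \<inter> S)"
    proof -
      have "measure (PiM I \<nu>) (F \<inter> S) = measure P (S \<inter> (F \<inter> S)) / measure P S"
        unfolding Qeq by (rule measure_uniform_measure[OF PS0 PSfin]) (use FP in auto)
      then show ?thesis using pS p by (simp add: Int_commute Int_left_commute)
    qed
    also have "measure (PiM I \<nu>) (F \<inter> S) \<le> measure (PiM I \<nu>) {x\<in>space (PiM I \<nu>). g x > (\<integral>z. g z \<partial>PiM I \<nu>) + t}"
    proof (rule Q.finite_measure_mono)
      show "F \<inter> S \<subseteq> {x\<in>space (PiM I \<nu>). g x > (\<integral>z. g z \<partial>PiM I \<nu>) + t}"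
        using gQ Ssp unfolding F_def space_PiM_nu by (auto simp: g_def projid)
      show "{x\<in>space (PiM I \<nu>). g x > (\<integral>z. g z \<partial>PiM I \<nu>) + t} \<in> sets (PiM I \<nu>)"
        using gmQ by measurable
    qed
    finally have "measure P F \<le> p * exp (-2*t\<^sup>2/D) + (1 - p)"
      using tail p by (smt (verit) mult_left_mono)
    moreover have "p * exp (-2*t\<^sup>2/D) \<le> exp (-2*t\<^sup>2/D)"
      using prob_le_1[of B] unfolding p_def by (intro mult_left_le_one_le) auto
    ultimately show ?thesis unfolding mE mB by linarith
  qed
  show ?thesis using goal_eq main by blast
qed

end
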